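(* Let $(R,\mathfrak m)$ be a Noetherian local ring, $X$ a finitely generated $R$-module, $N$ a Burch submodule of $X$, $t\ge1$ an integer, and $M$ a finitely generated $R$-module with $\operatorname{Tor}_t^R(M,N)=\operatorname{Tor}_t^R(M,X/N)=0$. Then $\operatorname{pd}_R M<t$.
   Context: For a submodule $N\subseteq X$, $(N:_X\mathfrak m)=\{x\in X:\mathfrak m x\subseteq N\}$. $N$ is a Burch submodule of $X$ if $\mathfrak m(N:_X\mathfrak m)\neq\mathfrak m N$. The projective dimension of the zero module is $-\infty$. *)

theory Defs
  imports Main "HOL-Library.Extended_Real"
begin

(* The ring R is the whole type 'a :: comm_ring_1.  An R-module is a type 'b :: ab_group_add
   together with a scalar multiplication  s :: 'a => 'b => 'b  satisfying  module s  (HOL/Modules). *)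

definition ring_ideal :: "'a::comm_ring_1 set \<Rightarrow> bool" where
  "ring_ideal I \<longleftrightarrow> module.subspace ((*) :: 'a \<Rightarrow> 'a \<Rightarrow> 'a) I"

definition noetherian_ring :: "'a::comm_ring_1 itself \<Rightarrow> bool" where
  "noetherian_ring _ \<longleftrightarrow>
     (\<forall>I :: 'a set. ring_ideal I \<longrightarrow>
        (\<exists>S. finite S \<and> S \<subseteq> I \<and> I = module.span ((*) :: 'a \<Rightarrow> 'a \<Rightarrow> 'a) S))"

definition maximal_ideal :: "'a::comm_ring_1 set \<Rightarrow> bool" where
  "maximal_ideal m \<longleftrightarrow> ring_ideal m \<and> m \<noteq> UNIV \<and>
     (\<forall>J. ring_ideal J \<and> m \<subseteq> J \<longrightarrow> J = m \<or> J = UNIV)"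

definition local_ring :: "'a::comm_ring_1 itself \<Rightarrow> bool" where
  "local_ring _ \<longleftrightarrow> (\<exists>!m :: 'a set. maximal_ideal m)"

definition fin_gen_module :: "('a::comm_ring_1 \<Rightarrow> 'b::ab_group_add \<Rightarrow> 'b) \<Rightarrow> bool" where
  "fin_gen_module s \<longleftrightarrow> module s \<and> (\<exists>S. finite S \<and> module.span s S = UNIV)"

definition ideal_times :: "('a::comm_ring_1 \<Rightarrow> 'b::ab_group_add \<Rightarrow> 'b) \<Rightarrow> 'a set \<Rightarrow> 'b set \<Rightarrow> 'b set" where
  "ideal_times s I L = module.span s {s r x | r x. r \<in> I \<and> x \<in> L}"

definition colon_sub :: "('a::comm_ring_1 \<Rightarrow> 'b::ab_group_add \<Rightarrow> 'b) \<Rightarrow> 'b set \<Rightarrow> 'a set \<Rightarrow> 'b set" where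
  "colon_sub s N m = {x. \<forall>r\<in>m. s r x \<in> N}"

definition burch_submodule :: "('a::comm_ring_1 \<Rightarrow> 'b::ab_group_add \<Rightarrow> 'b) \<Rightarrow> 'a set \<Rightarrow> 'b set \<Rightarrow> bool" where
  "burch_submodule s m N \<longleftrightarrow> module.subspace s N \<and>
     ideal_times s m (colon_sub s N m) \<noteq> ideal_times s m N"

(* R^k is represented by vectors  v :: nat => 'a  with  v j = 0  for  j >= k.
   A resolution of M is given by ranks  rk i  (F_i = R^(rk i)), matrices  d i  (d i j l is the
   (j,l) entry of  d_i : F_i -> F_(i-1), i >= 1), and the images  e l  in M of the standard basis
   of F_0 (the augmentation F_0 -> M). *)

definition fvecs :: "nat \<Rightarrow> (nat \<Rightarrow> 'a::zero) set" where
  "fvecs k = {v. \<forall>j\<ge>k. v j = 0}"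

definition mat_app ::
  "('a::comm_ring_1 \<Rightarrow> 'b::ab_group_add \<Rightarrow> 'b) \<Rightarrow> nat \<Rightarrow> nat \<Rightarrow> (nat \<Rightarrow> nat \<Rightarrow> 'a) \<Rightarrow> (nat \<Rightarrow> 'b) \<Rightarrow> (nat \<Rightarrow> 'b)" where
  "mat_app s rows cols A u = (\<lambda>j. if j < rows then (\<Sum>l<cols. s (A j l) (u l)) else 0)"

definition is_free_res ::
  "('a::comm_ring_1 \<Rightarrow> 'm::ab_group_add \<Rightarrow> 'm) \<Rightarrow> (nat \<Rightarrow> nat) \<Rightarrow> (nat \<Rightarrow> nat \<Rightarrow> nat \<Rightarrow> 'a) \<Rightarrow> (nat \<Rightarrow> 'm) \<Rightarrow> bool" where
  "is_free_res s rk d e \<longleftrightarrow>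
     (\<forall>x. \<exists>v\<in>fvecs (rk 0). (\<Sum>l<rk 0. s (v l) (e l)) = x) \<and>
     (\<forall>v\<in>fvecs (rk 0). (\<Sum>l<rk 0. s (v l) (e l)) = 0 \<longleftrightarrow>
         (\<exists>w\<in>fvecs (rk 1). v = mat_app (*) (rk 0) (rk 1) (d 1) w)) \<and>
     (\<forall>i\<ge>1. \<forall>v\<in>fvecs (rk i). (\<forall>j. mat_app (*) (rk (i - 1)) (rk i) (d i) v j = 0) \<longleftrightarrow>
         (\<exists>w\<in>fvecs (rk (i + 1)). v = mat_app (*) (rk i) (rk (i + 1)) (d (i + 1)) w))"

(* Tor_t^R(M, A/B) = 0, where B \<subseteq> A are submodules of the module (X, sX), computed as the t-th
   homology of  F \<otimes>_R (A/B)  for a free resolution F of M; here  R^k \<otimes> (A/B) = (A/B)^k  and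
   d_i \<otimes> (A/B) acts by the same matrix.  Tor does not depend on the resolution; we require
   vanishing for every such resolution.  Tor_t(M,N) is the case A = N, B = {0};
   Tor_t(M,X/N) is the case A = UNIV, B = N. *)
definition tor_zero ::
  "('a::comm_ring_1 \<Rightarrow> 'm::ab_group_add \<Rightarrow> 'm) \<Rightarrow> ('a \<Rightarrow> 'x::ab_group_add \<Rightarrow> 'x) \<Rightarrow> nat \<Rightarrow> 'x set \<Rightarrow> 'x set \<Rightarrow> bool" where
  "tor_zero sM sX t A B \<longleftrightarrow>
     (\<forall>rk d e. is_free_res sM rk d e \<longrightarrow>
        (\<forall>u. (\<forall>j. u j \<in> A) \<and> u \<in> fvecs (rk t) \<and>
             (\<forall>j. mat_app sX (rk (t - 1)) (rk t) (d t) u j \<in> B) \<longrightarrow>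
             (\<exists>w. (\<forall>j. w j \<in> A) \<and> w \<in> fvecs (rk (t + 1)) \<and>
                  (\<forall>j. u j - mat_app sX (rk t) (rk (t + 1)) (d (t + 1)) w j \<in> B))))"

definition has_free_res_len :: "('a::comm_ring_1 \<Rightarrow> 'm::ab_group_add \<Rightarrow> 'm) \<Rightarrow> nat \<Rightarrow> bool" where
  "has_free_res_len s L \<longleftrightarrow> (\<exists>rk d e. is_free_res s rk d e \<and> (\<forall>i>L. rk i = 0))"

(* pd of the zero module is -\<infinity>; no finite resolution gives +\<infinity> *)
definition proj_dim :: "('a::comm_ring_1 \<Rightarrow> 'm::ab_group_add \<Rightarrow> 'm) \<Rightarrow> ereal" where
  "proj_dim s = (if (UNIV :: 'm set) = {0} then -\<infinity>
                 else Inf {ereal (real L) | L. has_free_res_len s L})"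

end

theory Submission
  imports Defs "HOL-Library.Function_Algebras"
begin


lemma ring_module: "module ((*) :: 'a::comm_ring_1 \<Rightarrow> 'a \<Rightarrow> 'a)"
  by unfold_locales (auto simp: algebra_simps)

lemma ideal_mult: "ring_ideal I \<Longrightarrow> x \<in> I \<Longrightarrow> (c::'a::comm_ring_1) * x \<in> I"
  unfolding ring_ideal_def using module.subspace_scale[OF ring_module] by blast

lemma ideal_UNIV: "ring_ideal I \<Longrightarrow> (1::'a::comm_ring_1) \<in> I \<Longrightarrow> I = UNIV"
  using ideal_mult[of I 1] by auto

lemma unit_outside_max:
  fixes m :: "'a::comm_ring_1 set"
  assumes loc: "local_ring TYPE('a)" and mm: "maximal_ideal m" and xm: "x \<notin> m"
  shows "\<exists>y. y * x = 1"
proof (rule ccontr)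
  assume nu: "\<not> (\<exists>y. y * x = 1)"
  define A where "A = {I. ring_ideal I \<and> x \<in> I \<and> (1::'a) \<notin> I}"
  have P: "range (\<lambda>c. c * x) \<in> A"
  proof -
    have "ring_ideal (range (\<lambda>c. c * x))"
      unfolding ring_ideal_def module.subspace_def[OF ring_module]
    proof (intro conjI ballI allI)
      show "0 \<in> range (\<lambda>c. c * x)" by (rule image_eqI[of _ _ 0]) simp_all
    next
      fix a b assume "a \<in> range (\<lambda>c. c * x)" "b \<in> range (\<lambda>c. c * x)"
      then obtain c d where "a = c * x" "b = d * x" by blast
      then have "a + b = (c + d) * x" by (simp add: distrib_right)
      then show "a + b \<in> range (\<lambda>c. c * x)" by blast
    next
      fix e a assume "a \<in> range (\<lambda>c. c * x)"
      then obtain c where "a = c * x" by blast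
      then have "e * a = (e * c) * x" by (simp add: mult.assoc)
      then show "e * a \<in> range (\<lambda>c. c * x)" by blast
    qed
    moreover have "x \<in> range (\<lambda>c. c * x)" by (metis mult_1 rangeI)
    ultimately show ?thesis using nu unfolding A_def by auto
  qed
  have "\<forall>C\<in>chains A. \<exists>U\<in>A. \<forall>X\<in>C. X \<subseteq> U"
  proof
    fix C assume C: "C \<in> chains A"
    show "\<exists>U\<in>A. \<forall>X\<in>C. X \<subseteq> U"
    proof (cases "C = {}")
      case True then show ?thesis using P by auto
    next
      case False
      have CA: "C \<subseteq> A" and ch: "\<And>X Y. X \<in> C \<Longrightarrow> Y \<in> C \<Longrightarrow> X \<subseteq> Y \<or> Y \<subseteq> X"
        using C unfolding chains_def chain_subset_def by auto
      have "ring_ideal (\<Union>C)"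
        unfolding ring_ideal_def module.subspace_def[OF ring_module]
      proof (intro conjI ballI allI)
        show "0 \<in> \<Union>C" using False CA unfolding A_def ring_ideal_def
          using module.subspace_0[OF ring_module] by blast
      next
        fix a b assume "a \<in> \<Union>C" "b \<in> \<Union>C"
        then obtain X Y where X: "X \<in> C" "a \<in> X" and Y: "Y \<in> C" "b \<in> Y" by auto
        from ch[OF X(1) Y(1)] show "a + b \<in> \<Union>C"
        proof
          assume "X \<subseteq> Y"
          then have "a + b \<in> Y" using X Y CA unfolding A_def ring_ideal_def
            using module.subspace_add[OF ring_module] by blast
          then show ?thesis using Y by auto
        next
          assume "Y \<subseteq> X"
          then have "a + b \<in> X" using X Y CA unfolding A_def ring_ideal_def
            using module.subspace_add[OF ring_module] by blast
          then show ?thesis using X by auto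
        qed
      next
        fix c a assume "a \<in> \<Union>C"
        then obtain X where X: "X \<in> C" "a \<in> X" by auto
        then have "c * a \<in> X" using CA unfolding A_def using ideal_mult by blast
        then show "c * a \<in> \<Union>C" using X by auto
      qed
      moreover have "x \<in> \<Union>C" using False CA unfolding A_def by auto
      moreover have "1 \<notin> \<Union>C" using CA unfolding A_def by auto
      ultimately show ?thesis unfolding A_def by auto
    qed
  qed
  from Zorn_Lemma2[OF this] obtain M where M: "M \<in> A" and Mmax: "\<forall>X\<in>A. M \<subseteq> X \<longrightarrow> X = M" by blast
  have "maximal_ideal M"
    unfolding maximal_ideal_def
  proof (intro conjI allI impI)
    show "ring_ideal M" using M unfolding A_def by auto
    show "M \<noteq> UNIV" using M unfolding A_def by auto
    fix J assume J: "ring_ideal J \<and> M \<subseteq> J"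
    show "J = M \<or> J = UNIV"
    proof (cases "1 \<in> J")
      case True then show ?thesis using J ideal_UNIV by blast
    next
      case False
      then have "J \<in> A" using J M unfolding A_def by auto
      then show ?thesis using Mmax J by auto
    qed
  qed
  with mm loc have "M = m" unfolding local_ring_def by auto
  then show False using M xm unfolding A_def by auto
qed




lemma reindex_img:
  assumes "p < (k::nat)"
  shows "(\<lambda>l. if l < p then g l else g (Suc l)) ` {..<k-1} = g ` ({..<k} - {p})"
proof
  show "(\<lambda>l. if l < p then g l else g (Suc l)) ` {..<k-1} \<subseteq> g ` ({..<k} - {p})"
  proof
    fix y assume "y \<in> (\<lambda>l. if l < p then g l else g (Suc l)) ` {..<k-1}"
    then obtain l where l: "l < k - 1" "y = (if l < p then g l else g (Suc l))" by blast
    show "y \<in> g ` ({..<k} - {p})"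
    proof (cases "l < p")
      case True
      have "l \<in> {..<k} - {p}" using l(1) True by simp
      moreover have "y = g l" using l(2) True by simp
      ultimately show ?thesis by (rule image_eqI[rotated])
    next
      case False
      have "Suc l \<in> {..<k} - {p}" using l(1) False by simp
      moreover have "y = g (Suc l)" using l(2) False by simp
      ultimately show ?thesis by (rule image_eqI[rotated])
    qed
  qed
next
  show "g ` ({..<k} - {p}) \<subseteq> (\<lambda>l. if l < p then g l else g (Suc l)) ` {..<k-1}"
  proof
    fix y assume "y \<in> g ` ({..<k} - {p})"
    then obtain j where j: "j < k" "j \<noteq> p" "y = g j" by auto
    show "y \<in> (\<lambda>l. if l < p then g l else g (Suc l)) ` {..<k-1}"
    proof (cases "j < p")
      case True
      have "j \<in> {..<k-1}" using True assms by simp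
      moreover have "y = (if j < p then g j else g (Suc j))" using True j by simp
      ultimately show ?thesis by (rule image_eqI[rotated])
    next
      case False
      have "\<not> (j - 1 < p)" "Suc (j - 1) = j" using False j by auto
      then have y: "y = (if j - 1 < p then g (j - 1) else g (Suc (j - 1)))" using j by simp
      have "j - 1 \<in> {..<k-1}" using False j by simp
      with y show ?thesis by (rule image_eqI)
    qed
  qed
qed



context module begin

lemma span_idx:
  "x \<in> span (g ` {..<k}) \<longleftrightarrow> (\<exists>v\<in>fvecs k. x = (\<Sum>l<k. v l *s g l))"
proof (induction k arbitrary: x)
  case 0
  have "(\<lambda>_. 0) \<in> fvecs 0" by (simp add: fvecs_def)
  then show ?case by auto
next
  case (Suc k)
  have img: "g ` {..<Suc k} = insert (g k) (g ` {..<k})" by (simp add: lessThan_Suc)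
  show ?case
  proof
    assume "x \<in> span (g ` {..<Suc k})"
    then obtain c where "x - c *s g k \<in> span (g ` {..<k})" unfolding img span_insert by auto
    then obtain v where v: "v \<in> fvecs k" "x - c *s g k = (\<Sum>l<k. v l *s g l)" using Suc.IH by blast
    define v' where "v' = v(k := c)"
    have "v' \<in> fvecs (Suc k)" using v(1) unfolding v'_def fvecs_def by auto
    moreover have "(\<Sum>l<Suc k. v' l *s g l) = (\<Sum>l<k. v l *s g l) + c *s g k"
      unfolding v'_def by (simp add: sum.lessThan_Suc) 
    ultimately show "\<exists>v\<in>fvecs (Suc k). x = (\<Sum>l<Suc k. v l *s g l)" using v(2)
      by (metis diff_add_cancel)
  next
    assume "\<exists>v\<in>fvecs (Suc k). x = (\<Sum>l<Suc k. v l *s g l)"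
    then obtain v where v: "v \<in> fvecs (Suc k)" "x = (\<Sum>l<Suc k. v l *s g l)" by blast
    define v' where "v' = v(k := 0)"
    have "v' \<in> fvecs k" using v(1) unfolding v'_def fvecs_def by auto
    moreover have "x - v k *s g k = (\<Sum>l<k. v' l *s g l)"
      unfolding v'_def v(2) by (simp add: sum.lessThan_Suc)
    ultimately have "x - v k *s g k \<in> span (g ` {..<k})" using Suc.IH by blast
    then show "x \<in> span (g ` {..<Suc k})" unfolding img span_insert by auto
  qed
qed

lemma mingen:
  fixes m :: "'a set"
  assumes loc: "local_ring TYPE('a)" and mm: "maximal_ideal m" and fS: "finite S"
  shows "\<exists>(k::nat) g. span (g ` {..<k}) = span S \<and> (\<forall>v. (\<Sum>l<k. v l *s g l) = 0 \<longrightarrow> (\<forall>l<k. v l \<in> m))"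
proof -
  define P where "P (k::nat) \<longleftrightarrow> (\<exists>g. span (g ` {..<k}) = span S)" for k
  obtain xs where xs: "set xs = S" using fS finite_list by blast
  have "(!) xs ` {..<length xs} = S" using xs by (auto simp: set_conv_nth)
  then have "P (length xs)" unfolding P_def by blast
  define k0 where "k0 = (LEAST k. P k)"
  have "P k0" unfolding k0_def using \<open>P (length xs)\<close> by (rule LeastI)
  then obtain g where g: "span (g ` {..<k0}) = span S" unfolding P_def by blast
  have "\<forall>v. (\<Sum>l<k0. v l *s g l) = 0 \<longrightarrow> (\<forall>l<k0. v l \<in> m)"
  proof (rule allI, rule impI, rule ccontr)
    fix v assume sv: "(\<Sum>l<k0. v l *s g l) = 0" and "\<not> (\<forall>l<k0. v l \<in> m)"
    then obtain p where p: "p < k0" "v p \<notin> m" by auto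
    obtain c where c: "c * v p = 1" using unit_outside_max[OF loc mm p(2)] by blast
    have split: "(\<Sum>l<k0. v l *s g l) = v p *s g p + (\<Sum>l\<in>{..<k0}-{p}. v l *s g l)"
      using p(1) sum.remove[of "{..<k0}" p "\<lambda>l. v l *s g l"] by simp
    have "c *s (\<Sum>l<k0. v l *s g l) = g p + (\<Sum>l\<in>{..<k0}-{p}. (c * v l) *s g l)"
      unfolding split scale_right_distrib scale_sum_right scale_scale c mult.assoc[symmetric] scale_one by simp
    then have gp: "g p = - (\<Sum>l\<in>{..<k0}-{p}. (c * v l) *s g l)" using sv
      by (simp add: eq_neg_iff_add_eq_0)
    have "g p \<in> span (g ` ({..<k0}-{p}))"
      unfolding gp by (intro span_neg span_sum span_scale span_base) auto
    then have A1: "g ` {..<k0} \<subseteq> span (g ` ({..<k0}-{p}))"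
    proof -
      assume gp': "g p \<in> span (g ` ({..<k0}-{p}))"
      show ?thesis
      proof
        fix y assume "y \<in> g ` {..<k0}"
        then obtain l where l: "l < k0" "y = g l" by blast
        show "y \<in> span (g ` ({..<k0}-{p}))"
        proof (cases "l = p")
          case True then show ?thesis using gp' l by simp
        next
          case False
          then have "l \<in> {..<k0}-{p}" using l by simp
          then have "g l \<in> g ` ({..<k0}-{p})" by (rule imageI)
          then show ?thesis using l span_base by simp
        qed
      qed
    qed
    have A2: "g ` ({..<k0}-{p}) \<subseteq> span (g ` {..<k0})"
      using span_superset[of "g ` {..<k0}"] by blast
    have "span (g ` ({..<k0}-{p})) = span (g ` {..<k0})"
      using span_eq A1 A2 by simp
    then have "span ((\<lambda>l. if l < p then g l else g (Suc l)) ` {..<k0-1}) = span S"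
      using g reindex_img[OF p(1), of g] by simp
    then have "P (k0 - 1)" unfolding P_def by (rule exI[where x="\<lambda>l. if l < p then g l else g (Suc l)"])
    moreover have "k0 - 1 < k0" using p(1) by auto
    then have "\<not> P (k0 - 1)" unfolding k0_def by (rule not_less_Least)
    ultimately show False by blast
  qed
  then have "span (g ` {..<k0}) = span S \<and> (\<forall>v. (\<Sum>l<k0. v l *s g l) = 0 \<longrightarrow> (\<forall>l<k0. v l \<in> m))"
    using g by simp
  then show ?thesis by blast
qed

end



definition vsc :: "'a::comm_ring_1 \<Rightarrow> (nat \<Rightarrow> 'a) \<Rightarrow> (nat \<Rightarrow> 'a)" where
  "vsc r v = (\<lambda>j. r * v j)"

lemma vsc_module: "module (vsc :: 'a::comm_ring_1 \<Rightarrow> _)"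
proof
  fix a b :: 'a and x y :: "nat \<Rightarrow> 'a"
  show "vsc a (x + y) = vsc a x + vsc a y" by (rule ext) (simp add: vsc_def distrib_left)
  show "vsc (a + b) x = vsc a x + vsc b x" by (rule ext) (simp add: vsc_def distrib_right)
  show "vsc a (vsc b x) = vsc (a * b) x" by (rule ext) (simp add: vsc_def mult.assoc)
  show "vsc 1 x = x" by (rule ext) (simp add: vsc_def)
qed

lemma sum_fun_apply: "(\<Sum>a\<in>A. f a) j = (\<Sum>a\<in>A. f a j)"
  by (induction A rule: infinite_finite_induct) auto

lemma vsc_apply[simp]: "vsc r v j = r * v j" by (simp add: vsc_def)

lemma noeth_fvecs:
  fixes K :: "(nat \<Rightarrow> 'a::comm_ring_1) set"
  assumes noeth: "noetherian_ring TYPE('a)"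
  shows "module.subspace vsc K \<Longrightarrow> K \<subseteq> fvecs n \<Longrightarrow> \<exists>S. finite S \<and> S \<subseteq> K \<and> module.span vsc S = K"
proof (induction n arbitrary: K)
  case 0
  have "K \<subseteq> {0}"
  proof
    fix v assume "v \<in> K"
    then have "\<forall>j. v j = 0" using 0(2) unfolding fvecs_def by blast
    then have "v = 0" by (simp add: fun_eq_iff)
    then show "v \<in> {0}" by simp
  qed
  moreover have "0 \<in> K" using module.subspace_0[OF vsc_module 0(1)] .
  ultimately have "K = {0}" by auto
  then have "finite {} \<and> {} \<subseteq> K \<and> module.span vsc {} = K"
    using module.span_empty[OF vsc_module] by simp
  then show ?case by (rule exI)
next
  case (Suc n)
  interpret V: module "vsc :: 'a \<Rightarrow> _" by (rule vsc_module)
  interpret R: module "(*) :: 'a \<Rightarrow> 'a \<Rightarrow> 'a" by (rule ring_module)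
  define I where "I = (\<lambda>v. v n) ` K"
  have "ring_ideal I"
    unfolding ring_ideal_def
  proof (rule R.subspaceI)
    show "0 \<in> I" unfolding I_def using V.subspace_0[OF Suc.prems(1)] by (intro image_eqI[of _ _ 0]) auto
  next
    fix x y assume "x \<in> I" "y \<in> I"
    then obtain u w where "u \<in> K" "w \<in> K" "x = u n" "y = w n" unfolding I_def by blast
    then show "x + y \<in> I" unfolding I_def using V.subspace_add[OF Suc.prems(1)]
      by (intro image_eqI[of _ _ "u + w"]) auto
  next
    fix c x assume "x \<in> I"
    then obtain u where "u \<in> K" "x = u n" unfolding I_def by blast
    then show "c * x \<in> I" unfolding I_def using V.subspace_scale[OF Suc.prems(1)]
      by (intro image_eqI[of _ _ "vsc c u"]) auto
  qed
  then obtain T where T: "finite T" "T \<subseteq> I" "I = R.span T"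
    using noeth unfolding noetherian_ring_def by blast
  define pre where "pre a = (SOME v. v \<in> K \<and> v n = a)" for a
  have pre: "pre a \<in> K \<and> pre a n = a" if "a \<in> T" for a
  proof -
    have "\<exists>v. v \<in> K \<and> v n = a" using that T(2) unfolding I_def by blast
    then show ?thesis unfolding pre_def by (rule someI_ex)
  qed
  define K' where "K' = K \<inter> fvecs n"
  have sK': "V.subspace K'" unfolding K'_def
  proof (rule V.subspace_inter[OF Suc.prems(1)])
    show "V.subspace (fvecs n)" unfolding fvecs_def by (rule V.subspaceI) auto
  qed
  obtain S' where S': "finite S'" "S' \<subseteq> K'" "V.span S' = K'"
    using Suc.IH[OF sK'] unfolding K'_def by blast
  define S where "S = S' \<union> pre ` T"
  have "finite S" unfolding S_def using S'(1) T(1) by auto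
  moreover have SK: "S \<subseteq> K" unfolding S_def using S'(2) pre unfolding K'_def by auto
  moreover have "V.span S = K"
  proof
    show "V.span S \<subseteq> K" using V.span_minimal[OF SK Suc.prems(1)] .
  next
    show "K \<subseteq> V.span S"
    proof
      fix x assume xK: "x \<in> K"
      then have "x n \<in> R.span T" using T(3) unfolding I_def by blast
      then obtain c where c: "x n = (\<Sum>a\<in>T. c a * a)" using R.span_finite[OF T(1)] by auto
      define y where "y = x - (\<Sum>a\<in>T. vsc (c a) (pre a))"
      have sumK: "(\<Sum>a\<in>T. vsc (c a) (pre a)) \<in> K"
        using pre by (intro V.subspace_sum[OF Suc.prems(1)] V.subspace_scale[OF Suc.prems(1)]) auto
      have sumS: "(\<Sum>a\<in>T. vsc (c a) (pre a)) \<in> V.span S"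
        unfolding S_def by (intro V.span_sum V.span_scale V.span_base) auto
      have "y \<in> K" unfolding y_def using V.subspace_diff[OF Suc.prems(1) xK sumK] .
      moreover have "y \<in> fvecs n"
        unfolding fvecs_def
      proof (intro CollectI allI impI)
        fix j assume "j \<ge> n"
        show "y j = 0"
        proof (cases "j = n")
          case True
          have e1: "y j = x n - (\<Sum>a\<in>T. c a * pre a n)" unfolding y_def True by (simp add: sum_fun_apply)
          have e2: "(\<Sum>a\<in>T. c a * pre a n) = (\<Sum>a\<in>T. c a * a)"
            by (rule sum.cong) (simp_all add: pre)
          show ?thesis unfolding e1 e2 c[symmetric] by simp
        next
          case False
          then have j: "j \<ge> Suc n" using \<open>j \<ge> n\<close> by simp
          have "x j = 0" using xK Suc.prems(2) j unfolding fvecs_def by blast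
          moreover have "pre a j = 0" if "a \<in> T" for a
            using pre[OF that] Suc.prems(2) j unfolding fvecs_def by blast
          ultimately show ?thesis unfolding y_def by (simp add: sum_fun_apply)
        qed
      qed
      ultimately have "y \<in> V.span S'" using S'(3) unfolding K'_def by blast
      then have "y \<in> V.span S" using V.span_mono[of S' S] unfolding S_def by blast
      then have "y + (\<Sum>a\<in>T. vsc (c a) (pre a)) \<in> V.span S" using sumS V.span_add by blast
      then show "x \<in> V.span S" unfolding y_def by simp
    qed
  qed
  ultimately show ?case by blast
qed




definition Ker :: "('a::comm_ring_1 \<Rightarrow> 'b::ab_group_add \<Rightarrow> 'b) \<Rightarrow> nat \<Rightarrow> (nat \<Rightarrow> 'b) \<Rightarrow> (nat \<Rightarrow> 'a) set" where
  "Ker s k g = {v \<in> fvecs k. (\<Sum>l<k. s (v l) (g l)) = 0}"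

lemma Ker_subspace:
  assumes ms: "module s"
  shows "module.subspace vsc (Ker s k g)" "Ker s k g \<subseteq> fvecs k"
proof -
  interpret M: module s by (rule ms)
  interpret V: module "vsc :: 'a \<Rightarrow> _" by (rule vsc_module)
  show "Ker s k g \<subseteq> fvecs k" unfolding Ker_def by blast
  show "V.subspace (Ker s k g)"
  proof (rule V.subspaceI)
    show "0 \<in> Ker s k g" unfolding Ker_def fvecs_def by simp
  next
    fix x y assume x: "x \<in> Ker s k g" and y: "y \<in> Ker s k g"
    have "(\<Sum>l<k. s ((x + y) l) (g l)) = (\<Sum>l<k. s (x l) (g l)) + (\<Sum>l<k. s (y l) (g l))"
      by (simp add: M.scale_left_distrib sum.distrib)
    then show "x + y \<in> Ker s k g" using x y unfolding Ker_def fvecs_def by simp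
  next
    fix c x assume x: "x \<in> Ker s k g"
    have "(\<Sum>l<k. s (vsc c x l) (g l)) = s c (\<Sum>l<k. s (x l) (g l))"
      by (simp add: M.scale_sum_right)
    then show "vsc c x \<in> Ker s k g" using x unfolding Ker_def fvecs_def by simp
  qed
qed

definition mingood :: "'a::comm_ring_1 set \<Rightarrow> ('a \<Rightarrow> 'b::ab_group_add \<Rightarrow> 'b) \<Rightarrow> nat \<Rightarrow> (nat \<Rightarrow> 'b) \<Rightarrow> bool" where
  "mingood m s k g \<longleftrightarrow> (\<forall>v. (\<Sum>l<k. s (v l) (g l)) = 0 \<longrightarrow> (\<forall>l<k. v l \<in> m))"

definition good :: "'a::comm_ring_1 set \<Rightarrow> ('a \<Rightarrow> 'b::ab_group_add \<Rightarrow> 'b) \<Rightarrow> nat \<Rightarrow> (nat \<Rightarrow> 'b)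
    \<Rightarrow> nat \<times> (nat \<Rightarrow> nat \<Rightarrow> 'a) \<Rightarrow> bool" where
  "good m s k g p \<longleftrightarrow> module.span vsc (snd p ` {..<fst p}) = Ker s k g \<and> mingood m vsc (fst p) (snd p)"

definition nxt :: "'a::comm_ring_1 set \<Rightarrow> ('a \<Rightarrow> 'b::ab_group_add \<Rightarrow> 'b) \<Rightarrow> nat \<Rightarrow> (nat \<Rightarrow> 'b)
    \<Rightarrow> nat \<times> (nat \<Rightarrow> nat \<Rightarrow> 'a)" where
  "nxt m s k g = (SOME p. good m s k g p)"

lemma nxt_good:
  fixes m :: "'a::comm_ring_1 set"
  assumes noeth: "noetherian_ring TYPE('a)" and loc: "local_ring TYPE('a)" and mm: "maximal_ideal m"
    and ms: "module s"
  shows "good m s k g (nxt m s k g)"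
proof -
  interpret V: module "vsc :: 'a \<Rightarrow> _" by (rule vsc_module)
  have "\<exists>S. finite S \<and> S \<subseteq> Ker s k g \<and> V.span S = Ker s k g"
    by (rule noeth_fvecs[OF noeth Ker_subspace(1)[OF ms] Ker_subspace(2)[OF ms]])
  then obtain S where S: "finite S" "S \<subseteq> Ker s k g" "V.span S = Ker s k g" by blast
  obtain k' :: nat and g' where g': "V.span (g' ` {..<k'}) = V.span S"
    "\<forall>v. (\<Sum>l<k'. vsc (v l) (g' l)) = 0 \<longrightarrow> (\<forall>l<k'. v l \<in> m)"
    using V.mingen[OF loc mm S(1)] by blast
  have "good m s k g (k', g')" unfolding good_def mingood_def using g' S(3) by simp
  then show ?thesis unfolding nxt_def by (rule someI)
qed

lemma mat_app_sum:
  assumes "\<And>l. l < q \<Longrightarrow> h l \<in> fvecs p"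
  shows "mat_app (*) p q (\<lambda>j l. h l j) w = (\<Sum>l<q. vsc (w l) (h l))"
proof (rule ext)
  fix j
  show "mat_app (*) p q (\<lambda>j l. h l j) w j = (\<Sum>l<q. vsc (w l) (h l)) j"
  proof (cases "j < p")
    case True
    then show ?thesis unfolding mat_app_def sum_fun_apply by (simp add: mult.commute)
  next
    case False
    then have "\<And>l. l < q \<Longrightarrow> h l j = 0" using assms unfolding fvecs_def by auto
    then show ?thesis using False unfolding mat_app_def sum_fun_apply by simp
  qed
qed

lemma good_cols:
  assumes "good m s k g p" "l < fst p"
  shows "snd p l \<in> Ker s k g"
proof -
  interpret V: module "vsc :: 'a \<Rightarrow> _" by (rule vsc_module)
  have "snd p l \<in> V.span (snd p ` {..<fst p})" using assms(2) by (intro V.span_base) simp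
  then show ?thesis using assms(1) unfolding good_def by simp
qed

lemma good_cols_fvecs:
  assumes "good m s k g p" "l < fst p"
  shows "snd p l \<in> fvecs k"
  using good_cols[OF assms] unfolding Ker_def by blast

lemma good_exact:
  assumes gd: "good m s k g p" and v: "v \<in> fvecs k"
  shows "(\<Sum>l<k. s (v l) (g l)) = 0 \<longleftrightarrow>
         (\<exists>w\<in>fvecs (fst p). v = mat_app (*) k (fst p) (\<lambda>j l. snd p l j) w)"
proof -
  interpret V: module "vsc :: 'a \<Rightarrow> _" by (rule vsc_module)
  have "(\<Sum>l<k. s (v l) (g l)) = 0 \<longleftrightarrow> v \<in> Ker s k g" using v unfolding Ker_def by simp
  also have "\<dots> \<longleftrightarrow> v \<in> V.span (snd p ` {..<fst p})" using gd unfolding good_def by simp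
  also have "\<dots> \<longleftrightarrow> (\<exists>w\<in>fvecs (fst p). v = (\<Sum>l<fst p. vsc (w l) (snd p l)))" by (rule V.span_idx)
  also have "\<dots> \<longleftrightarrow> (\<exists>w\<in>fvecs (fst p). v = mat_app (*) k (fst p) (\<lambda>j l. snd p l j) w)"
    using mat_app_sum[of "fst p" "snd p" k] good_cols_fvecs[OF gd] by simp
  finally show ?thesis .
qed

lemma good_entries:
  assumes gd: "good m s k g p" and mg: "mingood m s k g" and l: "l < fst p" and j: "j < k"
  shows "snd p l j \<in> m"
proof -
  have "snd p l \<in> Ker s k g" by (rule good_cols[OF gd l])
  then have "(\<Sum>j<k. s (snd p l j) (g j)) = 0" unfolding Ker_def by blast
  then show ?thesis using mg j unfolding mingood_def by blast
qed

lemma vsc_zero_iff: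
  assumes "\<And>l. l < k \<Longrightarrow> g l \<in> fvecs p"
  shows "(\<Sum>l<k. vsc (v l) (g l)) = 0 \<longleftrightarrow> (\<forall>j. mat_app (*) p k (\<lambda>j l. g l j) v j = 0)"
  using mat_app_sum[of k g p v, OF assms] by (simp add: fun_eq_iff)




primrec lvl :: "'a::comm_ring_1 set \<Rightarrow> ('a \<Rightarrow> 'm::ab_group_add \<Rightarrow> 'm) \<Rightarrow> nat \<Rightarrow> (nat \<Rightarrow> 'm) \<Rightarrow> nat
    \<Rightarrow> nat \<times> (nat \<Rightarrow> nat \<Rightarrow> 'a)" where
  "lvl m s k0 e 0 = nxt m s k0 e"
| "lvl m s k0 e (Suc i) = nxt m vsc (fst (lvl m s k0 e i)) (snd (lvl m s k0 e i))"

lemma resolution_exists: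
  fixes m :: "'a::comm_ring_1 set" and sM :: "'a \<Rightarrow> 'm::ab_group_add \<Rightarrow> 'm"
  assumes noeth: "noetherian_ring TYPE('a)" and loc: "local_ring TYPE('a)" and mm: "maximal_ideal m"
    and ms: "module sM" and sp: "module.span sM (e ` {..<k0}) = UNIV" and mg0: "mingood m sM k0 e"
  shows "\<exists>rk d. is_free_res sM rk d e \<and> (\<forall>i\<ge>1. \<forall>j<rk (i-1). \<forall>l<rk i. d i j l \<in> m)"
proof -
  interpret M: module sM by (rule ms)
  define L where "L = lvl m sM k0 e"
  define rk where "rk i = (case i of 0 \<Rightarrow> k0 | Suc i \<Rightarrow> fst (L i))" for i
  define d where "d i j l = (case i of 0 \<Rightarrow> 0 | Suc i \<Rightarrow> snd (L i) l j)" for i j l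
  have G0: "good m sM k0 e (L 0)" unfolding L_def lvl.simps by (rule nxt_good[OF noeth loc mm ms])
  have GS: "good m vsc (fst (L i)) (snd (L i)) (L (Suc i))" for i
    unfolding L_def lvl.simps(2) by (rule nxt_good[OF noeth loc mm vsc_module])
  have MG: "mingood m vsc (fst (L i)) (snd (L i))" for i
  proof (cases i)
    case 0 then show ?thesis using G0 unfolding good_def by simp
  next
    case (Suc i') then show ?thesis using GS[of i'] unfolding good_def by simp
  qed
  have cols: "snd (L i) l \<in> fvecs (rk i)" if "l < fst (L i)" for i l
  proof (cases i)
    case 0 then show ?thesis using good_cols_fvecs[OF G0] that unfolding rk_def by simp
  next
    case (Suc i') then show ?thesis using good_cols_fvecs[OF GS[of i']] that unfolding rk_def by simp
  qed
  have "is_free_res sM rk d e"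
    unfolding is_free_res_def
  proof (intro conjI allI ballI impI)
    fix x
    have "x \<in> M.span (e ` {..<k0})" using sp by simp
    then show "\<exists>v\<in>fvecs (rk 0). (\<Sum>l<rk 0. sM (v l) (e l)) = x"
      unfolding M.span_idx rk_def by auto
  next
    fix v :: "nat \<Rightarrow> 'a" assume "v \<in> fvecs (rk 0)"
    then have v: "v \<in> fvecs k0" unfolding rk_def by simp
    have d1: "d 1 = (\<lambda>j l. snd (L 0) l j)" unfolding d_def by (simp add: fun_eq_iff)
    show "((\<Sum>l<rk 0. sM (v l) (e l)) = 0) =
          (\<exists>w\<in>fvecs (rk 1). v = mat_app (*) (rk 0) (rk 1) (d 1) w)"
      unfolding d1 using good_exact[OF G0 v] unfolding rk_def by simp
  next
    fix i and v :: "nat \<Rightarrow> 'a" assume i: "1 \<le> i" and v0: "v \<in> fvecs (rk i)"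
    then obtain i' where i': "i = Suc i'" by (cases i) auto
    have v: "v \<in> fvecs (fst (L i'))" using v0 unfolding i' rk_def by simp
    have di: "d i = (\<lambda>j l. snd (L i') l j)" unfolding d_def i' by (simp add: fun_eq_iff)
    have di1: "d (i + 1) = (\<lambda>j l. snd (L (Suc i')) l j)" unfolding d_def i' by (simp add: fun_eq_iff)
    have r1: "rk (i - 1) = rk i'" "rk i = fst (L i')" "rk (i + 1) = fst (L (Suc i'))"
      unfolding i' rk_def by simp_all
    have "(\<forall>j. mat_app (*) (rk (i - 1)) (rk i) (d i) v j = 0) \<longleftrightarrow>
          (\<Sum>l<fst (L i'). vsc (v l) (snd (L i') l)) = 0"
      unfolding di r1 using vsc_zero_iff[of "fst (L i')" "snd (L i')" "rk i'" v] cols[of _ i'] by simp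
    also have "\<dots> \<longleftrightarrow> (\<exists>w\<in>fvecs (fst (L (Suc i'))).
         v = mat_app (*) (fst (L i')) (fst (L (Suc i'))) (\<lambda>j l. snd (L (Suc i')) l j) w)"
      by (rule good_exact[OF GS v])
    finally show "(\<forall>j. mat_app (*) (rk (i - 1)) (rk i) (d i) v j = 0) =
         (\<exists>w\<in>fvecs (rk (i + 1)). v = mat_app (*) (rk i) (rk (i + 1)) (d (i + 1)) w)"
      unfolding di1 r1 .
  qed
  moreover have "\<forall>i\<ge>1. \<forall>j<rk (i-1). \<forall>l<rk i. d i j l \<in> m"
  proof (intro allI impI)
    fix i j l assume i: "1 \<le> i" and j: "j < rk (i - 1)" and l: "l < rk i"
    then obtain i' where i': "i = Suc i'" by (cases i) auto
    have l': "l < fst (L i')" using l unfolding i' rk_def by simp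
    have dd: "d i j l = snd (L i') l j" unfolding i' d_def by simp
    show "d i j l \<in> m"
    proof (cases i')
      case 0
      have "j < k0" using j unfolding i' 0 rk_def by simp
      then show ?thesis unfolding dd using good_entries[OF G0 mg0] l' 0 by simp
    next
      case (Suc i'')
      have "j < fst (L i'')" using j unfolding i' Suc rk_def by simp
      then show ?thesis unfolding dd using good_entries[OF GS[of i''] MG[of i'']] l' Suc by simp
    qed
  qed
  ultimately show ?thesis by blast
qed




lemma ring_comp_zero:
  assumes res: "is_free_res sM rk d e" and t: "t \<ge> 1" and l: "l < rk (t+1)" and j: "j < rk (t-1)"
  shows "(\<Sum>k<rk t. d t j k * d (t+1) k l) = 0"
proof -
  define dl :: "nat \<Rightarrow> 'a" where "dl = (\<lambda>x. if x = l then 1 else 0)"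
  have dl: "dl \<in> fvecs (rk (t+1))" using l unfolding dl_def fvecs_def by auto
  define v where "v = mat_app (*) (rk t) (rk (t+1)) (d (t+1)) dl"
  have vk: "v k = (if k < rk t then d (t+1) k l else 0)" for k
  proof -
    have "(\<Sum>l'<rk (t+1). d (t+1) k l' * dl l') = (\<Sum>l'<rk (t+1). if l' = l then d (t+1) k l' else 0)"
      unfolding dl_def by (intro sum.cong) auto
    also have "\<dots> = d (t+1) k l" using l by (simp add: sum.delta)
    finally show ?thesis unfolding v_def mat_app_def by simp
  qed
  have vf: "v \<in> fvecs (rk t)" unfolding fvecs_def using vk by simp
  have "\<forall>j. mat_app (*) (rk (t - 1)) (rk t) (d t) v j = 0"
    using res t vf dl unfolding is_free_res_def v_def by blast
  then have "mat_app (*) (rk (t - 1)) (rk t) (d t) v j = 0" by blast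
  then have "(\<Sum>k<rk t. d t j k * v k) = 0" using j unfolding mat_app_def by simp
  moreover have "(\<Sum>k<rk t. d t j k * v k) = (\<Sum>k<rk t. d t j k * d (t+1) k l)"
    using vk by (intro sum.cong) auto
  ultimately show ?thesis by simp
qed

lemma comp_zero:
  assumes ms: "module s" and res: "is_free_res sM rk d e" and t: "t \<ge> 1"
  shows "mat_app s (rk (t-1)) (rk t) (d t) (mat_app s (rk t) (rk (t+1)) (d (t+1)) w) j = 0"
proof (cases "j < rk (t-1)")
  case False then show ?thesis unfolding mat_app_def by simp
next
  case True
  interpret X: module s by (rule ms)
  have "mat_app s (rk (t-1)) (rk t) (d t) (mat_app s (rk t) (rk (t+1)) (d (t+1)) w) j
      = (\<Sum>k<rk t. s (d t j k) (\<Sum>l<rk (t+1). s (d (t+1) k l) (w l)))"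
    using True unfolding mat_app_def by simp
  also have "\<dots> = (\<Sum>k<rk t. \<Sum>l<rk (t+1). s (d t j k * d (t+1) k l) (w l))"
    by (simp add: X.scale_sum_right)
  also have "\<dots> = (\<Sum>l<rk (t+1). \<Sum>k<rk t. s (d t j k * d (t+1) k l) (w l))"
    by (rule sum.swap)
  also have "\<dots> = (\<Sum>l<rk (t+1). s (\<Sum>k<rk t. d t j k * d (t+1) k l) (w l))"
    by (simp add: X.scale_sum_left)
  also have "\<dots> = 0"
    using ring_comp_zero[OF res t _ True] by simp
  finally show ?thesis .
qed

lemma mat_app_neg_scale:
  assumes ms: "module s"
  shows "mat_app s p r A (\<lambda>k. - s a (x k)) j = - s a (mat_app s p r A x j)"
proof -
  interpret X: module s by (rule ms)
  show ?thesis unfolding mat_app_def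
    by (simp add: X.scale_sum_right sum_negf mult.commute)
qed

lemma tor_contra:
  fixes sX :: "'a::comm_ring_1 \<Rightarrow> 'x::ab_group_add \<Rightarrow> 'x"
  assumes ms: "module sX" and res: "is_free_res sM rk d e" and t: "t \<ge> 1" and r: "rk t \<ge> 1"
    and Am: "\<And>j l. j < rk (t-1) \<Longrightarrow> l < rk t \<Longrightarrow> d t j l \<in> m"
    and Bm: "\<And>j l. j < rk t \<Longrightarrow> l < rk (t+1) \<Longrightarrow> d (t+1) j l \<in> m"
    and T1: "tor_zero sM sX t N {0}" and T2: "tor_zero sM sX t UNIV N"
    and sN: "module.subspace sX N"
    and a: "a \<in> m" and z: "\<forall>c\<in>m. sX c z \<in> N" and az: "sX a z \<notin> ideal_times sX m N"
  shows False
proof -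
  interpret X: module sX by (rule ms)
  define p where "p = rk (t-1)"
  define q where "q = rk (t+1)"
  define u where "u = (\<lambda>j::nat. if j = 0 then z else 0)"
  have uf: "u \<in> fvecs (rk t)" using r unfolding u_def fvecs_def by auto
  have ucyc: "\<forall>j. mat_app sX p (rk t) (d t) u j \<in> N"
  proof
    fix j
    show "mat_app sX p (rk t) (d t) u j \<in> N"
    proof (cases "j < p")
      case True
      have "(\<Sum>l<rk t. sX (d t j l) (u l)) = (\<Sum>l<rk t. if l = 0 then sX (d t j l) z else 0)"
        unfolding u_def by (intro sum.cong) auto
      also have "\<dots> = sX (d t j 0) z" using r by (simp add: sum.delta)
      finally have "mat_app sX p (rk t) (d t) u j = sX (d t j 0) z" using True unfolding mat_app_def by simp
      moreover have "d t j 0 \<in> m" using Am True r unfolding p_def by simp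
      ultimately show ?thesis using z by simp
    next
      case False then show ?thesis unfolding mat_app_def using X.subspace_0[OF sN] by simp
    qed
  qed
  obtain w where w: "w \<in> fvecs q" and wN: "\<forall>j. u j - mat_app sX (rk t) q (d (t+1)) w j \<in> N"
    using T2 res uf ucyc unfolding tor_zero_def p_def q_def by blast
  define Bw where "Bw = mat_app sX (rk t) q (d (t+1)) w"
  define n where "n j = u j - Bw j" for j
  have nN: "n j \<in> N" for j using wN unfolding n_def Bw_def by blast
  define v where "v j = sX a (n j) - sX a (u j)" for j
  have veq: "v = (\<lambda>j. - sX a (Bw j))"
    unfolding v_def n_def by (simp add: fun_eq_iff X.scale_right_diff_distrib)
  have vN: "v j \<in> N" for j
  proof -
    have "sX a (u j) \<in> N"
      unfolding u_def using z a X.subspace_0[OF sN] by auto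
    then show ?thesis unfolding v_def using X.subspace_diff[OF sN X.subspace_scale[OF sN nN]] by blast
  qed
  have vf: "v \<in> fvecs (rk t)" unfolding veq fvecs_def Bw_def mat_app_def by simp
  have vcyc: "\<forall>j. mat_app sX p (rk t) (d t) v j \<in> {0}"
  proof
    fix j
    have "mat_app sX p (rk t) (d t) v j = - sX a (mat_app sX p (rk t) (d t) Bw j)"
      unfolding veq by (rule mat_app_neg_scale[OF ms])
    also have "\<dots> = 0" unfolding Bw_def p_def q_def using comp_zero[OF ms res t] by simp
    finally show "mat_app sX p (rk t) (d t) v j \<in> {0}" by simp
  qed
  obtain y where yN: "\<forall>j. y j \<in> N" and yv: "\<forall>j. v j - mat_app sX (rk t) q (d (t+1)) y j \<in> {0}"
    using T1 res vf vN vcyc unfolding tor_zero_def p_def q_def by blast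
  define G where "G = {sX c x | c x. c \<in> m \<and> x \<in> N}"
  have mN: "ideal_times sX m N = X.span G" unfolding ideal_times_def G_def ..
  have "v 0 = mat_app sX (rk t) q (d (t+1)) y 0" using yv by simp
  also have "\<dots> = (\<Sum>l<q. sX (d (t+1) 0 l) (y l))" using r unfolding mat_app_def by simp
  also have "\<dots> \<in> X.span G"
  proof (intro X.span_sum X.span_base)
    fix l assume "l \<in> {..<q}"
    then have "d (t+1) 0 l \<in> m" using Bm r unfolding q_def by simp
    then show "sX (d (t+1) 0 l) (y l) \<in> G" unfolding G_def using yN by blast
  qed
  finally have v0: "v 0 \<in> X.span G" .
  have n0: "sX a (n 0) \<in> X.span G" unfolding G_def using a nN by (intro X.span_base) blast
  have "sX a (u 0) = sX a (n 0) - v 0" unfolding v_def by simp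
  then have "sX a z \<in> X.span G" using X.span_diff[OF n0 v0] unfolding u_def by simp
  then show False using az mN by simp
qed

lemma truncate_res:
  assumes res: "is_free_res s rk d e" and t: "t \<ge> 1" and r0: "rk t = 0"
  shows "is_free_res s (\<lambda>i. if i < t then rk i else 0) d e"
proof -
  define rk' where "rk' = (\<lambda>i. if i < t then rk i else 0)"
  have same: "rk' i = rk i" if "i \<le> t" for i using that r0 unfolding rk'_def by auto
  have triv: "(\<forall>j. mat_app (*) (rk' (i - 1)) (rk' i) (d i) v j = 0) =
        (\<exists>w\<in>fvecs (rk' (i + 1)). v = mat_app (*) (rk' i) (rk' (i + 1)) (d (i + 1)) w)"
    if "i \<ge> t" "v \<in> fvecs (rk' i)" for i and v :: "nat \<Rightarrow> 'a"
  proof -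
    have z: "rk' i = 0" using that(1) r0 unfolding rk'_def by auto
    have v0: "v = (\<lambda>_. 0)" using that(2) unfolding z fvecs_def by auto
    have w0: "(\<lambda>_. 0) \<in> fvecs (rk' (i + 1))" unfolding fvecs_def by simp
    have "mat_app (*) (rk' i) (rk' (i + 1)) (d (i + 1)) (\<lambda>_. 0) = (\<lambda>_::nat. 0::'a)"
      unfolding mat_app_def by (simp add: fun_eq_iff)
    then have "\<exists>w\<in>fvecs (rk' (i + 1)). v = mat_app (*) (rk' i) (rk' (i + 1)) (d (i + 1)) w"
      using w0 v0 by metis
    moreover have "\<forall>j. mat_app (*) (rk' (i - 1)) (rk' i) (d i) v j = 0"
      unfolding mat_app_def z by simp
    ultimately show ?thesis by simp
  qed
  have "is_free_res s rk' d e"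
    unfolding is_free_res_def
  proof (intro conjI allI impI ballI)
    show "\<exists>v\<in>fvecs (rk' 0). (\<Sum>l<rk' 0. s (v l) (e l)) = x" for x
      using res same[of 0] unfolding is_free_res_def by simp
    show "((\<Sum>l<rk' 0. s (v l) (e l)) = 0) = (\<exists>w\<in>fvecs (rk' 1). v = mat_app (*) (rk' 0) (rk' 1) (d 1) w)"
      if "v \<in> fvecs (rk' 0)" for v
      using res that same[of 0] same[of 1] t unfolding is_free_res_def by simp
  next
    fix i and v :: "nat \<Rightarrow> 'a" assume i: "1 \<le> i" and v: "v \<in> fvecs (rk' i)"
    show "(\<forall>j. mat_app (*) (rk' (i - 1)) (rk' i) (d i) v j = 0) =
        (\<exists>w\<in>fvecs (rk' (i + 1)). v = mat_app (*) (rk' i) (rk' (i + 1)) (d (i + 1)) w)"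
    proof (cases "i < t")
      case True
      then have "rk' (i-1) = rk (i-1)" "rk' i = rk i" "rk' (i+1) = rk (i+1)" using same by auto
      then show ?thesis using res i v unfolding is_free_res_def by simp
    next
      case False then show ?thesis using triv v by simp
    qed
  qed
  then show ?thesis unfolding rk'_def .
qed




theorem corollary3p13:
  fixes m :: "'a::comm_ring_1 set"
    and sX :: "'a \<Rightarrow> 'x::ab_group_add \<Rightarrow> 'x"
    and sM :: "'a \<Rightarrow> 'm::ab_group_add \<Rightarrow> 'm"
    and N :: "'x set"
    and t :: nat
  assumes "noetherian_ring TYPE('a)"
    and "local_ring TYPE('a)"
    and "maximal_ideal m"
    and "fin_gen_module sX"
    and "burch_submodule sX m N"
    and "t \<ge> 1"
    and "fin_gen_module sM"
    and "tor_zero sM sX t N {0}"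
    and "tor_zero sM sX t UNIV N"
  shows "proj_dim sM < ereal (real t)"
proof -
  note noeth = assms(1) and loc = assms(2) and mm = assms(3) and t = assms(6)
  have msX: "module sX" using assms(4) unfolding fin_gen_module_def by blast
  interpret X: module sX by (rule msX)
  have msM: "module sM" using assms(7) unfolding fin_gen_module_def by blast
  interpret M: module sM by (rule msM)
  have sN: "X.subspace N" using assms(5) unfolding burch_submodule_def by blast
  have ne: "ideal_times sX m (colon_sub sX N m) \<noteq> ideal_times sX m N"
    using assms(5) unfolding burch_submodule_def by blast
  obtain a z where a: "a \<in> m" and z: "\<forall>c\<in>m. sX c z \<in> N" and az: "sX a z \<notin> ideal_times sX m N"
  proof -
    have "\<exists>a z. a \<in> m \<and> (\<forall>c\<in>m. sX c z \<in> N) \<and> sX a z \<notin> ideal_times sX m N"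
    proof (rule ccontr)
      assume H: "\<not> ?thesis"
      have "{sX r x | r x. r \<in> m \<and> x \<in> colon_sub sX N m} \<subseteq> ideal_times sX m N"
        using H unfolding colon_sub_def by blast
      then have s1: "ideal_times sX m (colon_sub sX N m) \<subseteq> ideal_times sX m N"
        unfolding ideal_times_def[of sX m "colon_sub sX N m"]
        by (rule X.span_minimal) (simp add: ideal_times_def)
      have "N \<subseteq> colon_sub sX N m" unfolding colon_sub_def using X.subspace_scale[OF sN] by blast
      then have "{sX r x | r x. r \<in> m \<and> x \<in> N} \<subseteq> {sX r x | r x. r \<in> m \<and> x \<in> colon_sub sX N m}"
        by blast
      then have s2: "ideal_times sX m N \<subseteq> ideal_times sX m (colon_sub sX N m)"
        unfolding ideal_times_def by (rule X.span_mono)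
      from s1 s2 ne show False by blast
    qed
    then show ?thesis using that by blast
  qed
  obtain S where S: "finite S" "M.span S = UNIV" using assms(7) unfolding fin_gen_module_def by blast
  obtain k0 :: nat and e where e: "M.span (e ` {..<k0}) = M.span S"
    "\<forall>v. (\<Sum>l<k0. sM (v l) (e l)) = 0 \<longrightarrow> (\<forall>l<k0. v l \<in> m)"
    using M.mingen[OF loc mm S(1)] by blast
  have mg0: "mingood m sM k0 e" unfolding mingood_def using e(2) .
  obtain rk d where res: "is_free_res sM rk d e" and ent: "\<forall>i\<ge>1. \<forall>j<rk (i-1). \<forall>l<rk i. d i j l \<in> m"
    using resolution_exists[OF noeth loc mm msM _ mg0] e(1) S(2) by metis
  have r0: "rk t = 0"
  proof (rule ccontr)
    assume "rk t \<noteq> 0"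
    then have r: "rk t \<ge> 1" by simp
    show False
    proof (rule tor_contra[OF msX res t r _ _ assms(8) assms(9) sN a z az])
      show "d t j l \<in> m" if "j < rk (t-1)" "l < rk t" for j l using ent t that by blast
      show "d (t+1) j l \<in> m" if "j < rk t" "l < rk (t+1)" for j l
        using ent[rule_format, of "t+1" j l] that by simp
    qed
  qed
  have "has_free_res_len sM (t - 1)"
    unfolding has_free_res_len_def
    using truncate_res[OF res t r0] by (intro exI[of _ "\<lambda>i. if i < t then rk i else 0"] exI[of _ d] exI[of _ e]) auto
  show ?thesis
  proof (cases "(UNIV :: 'm set) = {0}")
    case True then show ?thesis unfolding proj_dim_def by simp
  next
    case False
    have "Inf {ereal (real L) | L. has_free_res_len sM L} \<le> ereal (real (t - 1))"
      using \<open>has_free_res_len sM (t - 1)\<close> by (intro Inf_lower) blast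
    also have "\<dots> < ereal (real t)" using t by simp
    finally show ?thesis using False unfolding proj_dim_def by simp
  qed
qed


end
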